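(* Let $\tau\in\mathcal{L}$. Then $C(\tau)$ is closed in the Euclidean space $\mathbb{R}$, and moreover $C(\tau)$ is closed and meager in the space $(\mathbb{R},\tau)$.
   Context: $\eta$ denotes the Euclidean topology on $\mathbb{R}$. $\mathcal{L}$ denotes the family of all Hausdorff topologies $\tau$ on $\mathbb{R}$ with $\tau\subset\eta$. For $\tau\in\mathcal{L}$ and $a\in\mathbb{R}$ let $\mathcal{N}_\tau(a)$ be the neighborhood filter of $a$ in $(\mathbb{R},\tau)$; $C(\tau)$ is the set of all $a\in\mathbb{R}$ with $\mathcal{N}_\tau(a)\neq\mathcal{N}_\eta(a)$. *)

theory Defs
  imports "HOL-Analysis.Analysis"
begin

definition nowhere_dense_in :: "'a topology \<Rightarrow> 'a set \<Rightarrow> bool" where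
  "nowhere_dense_in X S \<longleftrightarrow> S \<subseteq> topspace X \<and> X interior_of (X closure_of S) = {}"

definition meager_in :: "'a topology \<Rightarrow> 'a set \<Rightarrow> bool" where
  "meager_in X S \<longleftrightarrow> (\<exists>F. countable F \<and> (\<forall>T\<in>F. nowhere_dense_in X T) \<and> S = \<Union>F)"

text \<open>The family L: Hausdorff topologies on the reals coarser than the Euclidean one.\<close>
definition coarser_Hausdorff :: "real topology \<Rightarrow> bool" where
  "coarser_Hausdorff \<tau> \<longleftrightarrow> topspace \<tau> = UNIV \<and> (\<forall>S. openin \<tau> S \<longrightarrow> open S) \<and> Hausdorff_space \<tau>"

definition C_set :: "real topology \<Rightarrow> real set" where
  "C_set \<tau> = {a. nhdsin \<tau> a \<noteq> nhdsin euclidean a}"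

end

theory Submission
  imports Defs
begin

lemma cH_compactin:
  assumes "coarser_Hausdorff \<tau>" "compact K"
  shows "compactin \<tau> K"
proof -
  have top: "topspace \<tau> = UNIV" and op: "\<And>S. openin \<tau> S \<Longrightarrow> open S"
    using assms(1) unfolding coarser_Hausdorff_def by auto
  have "continuous_map euclidean \<tau> id"
    unfolding continuous_map_def
  proof (intro conjI allI impI)
    show "id \<in> topspace euclidean \<rightarrow> topspace \<tau>" using top by simp
  next
    fix U assume "openin \<tau> U"
    then have "open U" by (rule op)
    moreover have "{x \<in> topspace euclidean. id x \<in> U} = U" by simp
    ultimately show "openin euclidean {x \<in> topspace euclidean. id x \<in> U}" by simp
  qed
  then have "compactin \<tau> (id ` K)"
    using image_compactin assms(2) compactin_euclidean_iff by blast
  then show ?thesis by simp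
qed

lemma nhdsin_euclidean_eq: "nhdsin euclidean a = nhds (a::'a::topological_space)"
proof (rule filter_eq_iff[THEN iffD2], intro allI)
  fix P :: "'a \<Rightarrow> bool"
  show "eventually P (nhdsin euclidean a) = eventually P (nhds a)"
    unfolding eventually_nhdsin eventually_nhds open_openin[symmetric] by simp
qed

lemma cH_notC_iff:
  assumes H: "coarser_Hausdorff \<tau>"
  shows "a \<notin> C_set \<tau> \<longleftrightarrow> (\<exists>U. openin \<tau> U \<and> a \<in> U \<and> bounded U)"
proof
  assume "a \<notin> C_set \<tau>"
  then have eq: "nhdsin \<tau> a = nhds a" by (simp add: C_set_def nhdsin_euclidean_eq)
  have "eventually (\<lambda>x. x \<in> ball a 1) (nhds a)"
    by (rule eventually_nhds_in_open) auto
  then have "eventually (\<lambda>x. x \<in> ball a 1) (nhdsin \<tau> a)" using eq by simp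
  then obtain U where "openin \<tau> U" "a \<in> U" "\<forall>x\<in>U. x \<in> ball a 1"
    using H by (auto simp: eventually_nhdsin coarser_Hausdorff_def)
  then show "\<exists>U. openin \<tau> U \<and> a \<in> U \<and> bounded U"
    by (meson bounded_ball bounded_subset subsetI)
next
  assume "\<exists>U. openin \<tau> U \<and> a \<in> U \<and> bounded U"
  then obtain U where U: "openin \<tau> U" "a \<in> U" "bounded U" by blast
  obtain R where R: "U \<subseteq> cball a R"
  proof -
    obtain R where "\<forall>y\<in>U. dist a y \<le> R" using U(3) bounded_any_center[of U a] by blast
    then show ?thesis using that by (auto simp: subset_iff)
  qed
  have top: "topspace \<tau> = UNIV" and op: "\<And>S. openin \<tau> S \<Longrightarrow> open S"
    and Hs: "Hausdorff_space \<tau>"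
    using H by (auto simp: coarser_Hausdorff_def)
  have "nhdsin \<tau> a = nhds a"
  proof (rule filter_eq_iff[THEN iffD2], intro allI iffI)
    fix P assume "eventually P (nhdsin \<tau> a)"
    then obtain S where "openin \<tau> S" "a \<in> S" "\<forall>x\<in>S. P x"
      by (auto simp: eventually_nhdsin top)
    then show "eventually P (nhds a)"
      unfolding eventually_nhds using op by blast
  next
    fix P assume "eventually P (nhds a)"
    then obtain e where e: "e > 0" "\<forall>x. dist x a < e \<longrightarrow> P x"
      by (auto simp: eventually_nhds_metric)
    define K where "K = cball a R - ball a e"
    have "compact K" unfolding K_def
      by (intro compact_diff) auto
    then have "compactin \<tau> K" using cH_compactin H by blast
    moreover have "compactin \<tau> {a}" using top by simp
    moreover have "disjnt {a} K" using e(1) by (simp add: K_def disjnt_def)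
    ultimately obtain V W where VW: "openin \<tau> V" "openin \<tau> W" "{a} \<subseteq> V" "K \<subseteq> W" "disjnt V W"
      using Hausdorff_space_compact_separation[OF Hs] by metis
    have "openin \<tau> (U \<inter> V)" using VW U by auto
    moreover have "a \<in> U \<inter> V" using VW U by auto
    moreover have "\<forall>x\<in>U \<inter> V. P x"
    proof
      fix x assume x: "x \<in> U \<inter> V"
      then have "x \<notin> K" using VW by (auto simp: disjnt_def)
      moreover have "x \<in> cball a R" using x R by auto
      ultimately have "dist x a < e" by (auto simp: K_def dist_commute)
      then show "P x" using e by auto
    qed
    ultimately show "eventually P (nhdsin \<tau> a)"
      unfolding eventually_nhdsin by blast
  qed
  then show "a \<notin> C_set \<tau>" by (simp add: C_set_def nhdsin_euclidean_eq)
qed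

theorem proposition3:
  fixes \<tau> :: "real topology"
  assumes "coarser_Hausdorff \<tau>"
  shows "closed (C_set \<tau>) \<and> closedin \<tau> (C_set \<tau>) \<and> meager_in \<tau> (C_set \<tau>)"
proof -
  have top: "topspace \<tau> = UNIV" and op: "\<And>S. openin \<tau> S \<Longrightarrow> open S"
    and Hs: "Hausdorff_space \<tau>"
    using assms by (auto simp: coarser_Hausdorff_def)
  have comp: "- C_set \<tau> = {a. \<exists>U. openin \<tau> U \<and> a \<in> U \<and> bounded U}"
    using cH_notC_iff[OF assms] by auto
  have oc: "openin \<tau> (- C_set \<tau>)"
    unfolding comp
  proof (subst openin_subopen, intro ballI)
    fix x assume "x \<in> {a. \<exists>U. openin \<tau> U \<and> a \<in> U \<and> bounded U}"
    then obtain U where U: "openin \<tau> U" "x \<in> U" "bounded U" by blast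
    have "U \<subseteq> {a. \<exists>U. openin \<tau> U \<and> a \<in> U \<and> bounded U}" using U by blast
    then show "\<exists>T. openin \<tau> T \<and> x \<in> T \<and> T \<subseteq> {a. \<exists>U. openin \<tau> U \<and> a \<in> U \<and> bounded U}"
      using U by blast
  qed
  have cl: "closedin \<tau> (C_set \<tau>)"
  proof -
    have "topspace \<tau> - C_set \<tau> = - C_set \<tau>" using top by blast
    then show ?thesis using oc top unfolding closedin_def by simp
  qed
  have clE: "closed (C_set \<tau>)"
    using op[OF oc] by (simp add: closed_def)
  define F where "F = range (\<lambda>n::nat. C_set \<tau> \<inter> cball 0 (real n))"
  have "countable F" unfolding F_def by simp
  moreover have "C_set \<tau> = \<Union>F"
  proof
    show "C_set \<tau> \<subseteq> \<Union>F"
    proof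
      fix x assume "x \<in> C_set \<tau>"
      moreover obtain n :: nat where "norm x \<le> real n" using real_arch_simple by blast
      ultimately show "x \<in> \<Union>F" unfolding F_def by auto
    qed
  qed (auto simp: F_def)
  moreover have "\<forall>T\<in>F. nowhere_dense_in \<tau> T"
  proof
    fix T assume "T \<in> F"
    then obtain n :: nat where T: "T = C_set \<tau> \<inter> cball 0 (real n)" by (auto simp: F_def)
    have "compact T" unfolding T using clE by (simp add: closed_Int_compact)
    then have "closedin \<tau> T" using cH_compactin[OF assms] compactin_imp_closedin[OF Hs] by blast
    then have ct: "\<tau> closure_of T = T" by (simp add: closure_of_eq)
    have "\<tau> interior_of T = {}"
    proof (rule ccontr)
      assume "\<tau> interior_of T \<noteq> {}"
      then obtain x where x: "x \<in> \<tau> interior_of T" by blast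
      have "bounded (\<tau> interior_of T)"
      proof -
        have "\<tau> interior_of T \<subseteq> cball 0 (real n)" using interior_of_subset[of \<tau> T] T by blast
        then show ?thesis using bounded_subset[OF bounded_cball] by blast
      qed
      then have "x \<notin> C_set \<tau>" using cH_notC_iff[OF assms] x openin_interior_of by blast
      moreover have "x \<in> C_set \<tau>" using x interior_of_subset[of \<tau> T] T by blast
      ultimately show False by blast
    qed
    then show "nowhere_dense_in \<tau> T" using ct top by (simp add: nowhere_dense_in_def)
  qed
  ultimately have "meager_in \<tau> (C_set \<tau>)" unfolding meager_in_def by (intro exI[of _ F] conjI)
  then show ?thesis using cl clE by (intro conjI)
qed

end
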